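(* Let $\mathcal{H}$ be a complex Hilbert space and $T\in\mathbb{B}(\mathcal{H})$. Then $$\Omega(T) \leq \min\left\{\sqrt{\|TT^* + T^*T\|},\ \sqrt{\|T\|^2 + w(T^2)}\right\}.$$
   Context: $\mathbb{B}(\mathcal{H})$ is the algebra of bounded linear operators on $\mathcal{H}$, $\|\cdot\|$ the usual operator norm, and $w(T)=\sup\{|\langle Tx,x\rangle|:\|x\|=1\}$ the numerical radius. Dragomir's norm is $\Omega(T)=\sup\{\|\zeta T+\eta T^*\|:\ \zeta,\eta\in\mathbb{C},\ |\zeta|^2+|\eta|^2\le 1\}$. *)

theory Defs
  imports "HOL-Analysis.Analysis"
begin

text \<open>Complex Hilbert spaces (not available in the distribution library):
  a Banach space with a complex scalar multiplication compatible with the real one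
  and a complex inner product (linear in the second argument) inducing the norm.\<close>

class chilbert_space = banach +
  fixes scaleC :: "complex \<Rightarrow> 'a \<Rightarrow> 'a" (infixr "*\<^sub>C" 75)
    and cinner :: "'a \<Rightarrow> 'a \<Rightarrow> complex"
  assumes scaleC_add_right: "a *\<^sub>C (x + y) = a *\<^sub>C x + a *\<^sub>C y"
    and scaleC_add_left: "(a + b) *\<^sub>C x = a *\<^sub>C x + b *\<^sub>C x"
    and scaleC_scaleC: "a *\<^sub>C (b *\<^sub>C x) = (a * b) *\<^sub>C x"
    and scaleC_one: "1 *\<^sub>C x = x"
    and scaleR_scaleC: "scaleR r x = complex_of_real r *\<^sub>C x"
    and cinner_commute: "cinner x y = cnj (cinner y x)"
    and cinner_add_right: "cinner x (y + z) = cinner x y + cinner x z"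
    and cinner_scaleC_right: "cinner x (a *\<^sub>C y) = a * cinner x y"
    and cinner_nonneg: "0 \<le> Re (cinner x x)"
    and cinner_eq_zero_iff: "cinner x x = 0 \<longleftrightarrow> x = 0"
    and norm_eq_sqrt_cinner: "norm x = sqrt (Re (cinner x x))"

definition bounded_clinear_op :: "('a::chilbert_space \<Rightarrow> 'a) \<Rightarrow> bool" where
  "bounded_clinear_op T \<longleftrightarrow>
     (\<forall>x y. T (x + y) = T x + T y) \<and> (\<forall>a x. T (a *\<^sub>C x) = a *\<^sub>C T x) \<and>
     (\<exists>K. \<forall>x. norm (T x) \<le> norm x * K)"

definition is_adjoint :: "('a::chilbert_space \<Rightarrow> 'a) \<Rightarrow> ('a \<Rightarrow> 'a) \<Rightarrow> bool" where
  "is_adjoint T S \<longleftrightarrow> (\<forall>x y. cinner (T x) y = cinner x (S y))"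

definition numrad :: "('a::chilbert_space \<Rightarrow> 'a) \<Rightarrow> real" where
  "numrad T = Sup (insert 0 ((\<lambda>x. cmod (cinner (T x) x)) ` {x. norm x = 1}))"

definition dragomir :: "('a::chilbert_space \<Rightarrow> 'a) \<Rightarrow> ('a \<Rightarrow> 'a) \<Rightarrow> real" where
  "dragomir T Ts = (SUP p \<in> {(z, e). (cmod z)\<^sup>2 + (cmod e)\<^sup>2 \<le> 1}.
      onorm (\<lambda>x. fst p *\<^sub>C T x + snd p *\<^sub>C Ts x))"

end

theory Submission
  imports Defs
begin

lemma ci_add_left: "cinner (x + y) (z::'a::chilbert_space) = cinner x z + cinner y z"
proof -
  have "cinner (x + y) z = cnj (cinner z x + cinner z y)"
    using cinner_commute[of "x+y" z] cinner_add_right[of z x y] by simp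
  also have "\<dots> = cinner x z + cinner y z"
    using cinner_commute[of x z] cinner_commute[of y z] by simp
  finally show ?thesis .
qed

lemma ci_scaleC_left: "cinner (a *\<^sub>C x) (y::'a::chilbert_space) = cnj a * cinner x y"
proof -
  have "cinner (a *\<^sub>C x) y = cnj (a * cinner y x)"
    using cinner_commute[of "a *\<^sub>C x" y] cinner_scaleC_right[of y a x] by simp
  also have "\<dots> = cnj a * cinner x y"
    using cinner_commute[of x y] by simp
  finally show ?thesis .
qed

lemma scaleC_zero_left[simp]: "0 *\<^sub>C (x::'a::chilbert_space) = 0"
proof -
  have "0 *\<^sub>C x = complex_of_real 0 *\<^sub>C x" by simp
  also have "\<dots> = scaleR 0 x" by (simp only: scaleR_scaleC)
  finally show ?thesis by simp
qed

lemma scaleC_zero_right[simp]: "a *\<^sub>C (0::'a::chilbert_space) = 0"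
  using scaleC_add_right[of a 0 0] by simp

lemma ci_zero_right[simp]: "cinner x (0::'a::chilbert_space) = 0"
  using cinner_scaleC_right[of x 0 0] by simp

lemma ci_zero_left[simp]: "cinner (0::'a::chilbert_space) x = 0"
  using cinner_commute[of 0 x] by simp

lemma ci_self: "cinner x (x::'a::chilbert_space) = complex_of_real ((norm x)^2)"
proof -
  have "Im (cinner x x) = Im (cnj (cinner x x))" using cinner_commute[of x x] by (rule arg_cong)
  hence "Im (cinner x x) = 0" by simp
  moreover have "Re (cinner x x) = (norm x)^2"
    using norm_eq_sqrt_cinner[of x] cinner_nonneg[of x] by simp
  ultimately show ?thesis by (simp add: complex_eq_iff)
qed

lemma scaleC_minus: "(-a) *\<^sub>C (x::'a::chilbert_space) = - (a *\<^sub>C x)"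
proof -
  have "(-a) *\<^sub>C x + a *\<^sub>C x = 0" using scaleC_add_left[of "-a" a x] by simp
  thus ?thesis by (rule add_eq_0_iff2[THEN iffD1])
qed

lemma ci_minus_right: "cinner x (- y::'a::chilbert_space) = - cinner x y"
proof -
  have "cinner x (-y) + cinner x y = 0" using cinner_add_right[of x "-y" y] by simp
  thus ?thesis by (rule add_eq_0_iff2[THEN iffD1])
qed

lemma ci_minus_left: "cinner (- x::'a::chilbert_space) y = - cinner x y"
proof -
  have "cinner (-x) y + cinner x y = 0" using ci_add_left[of "-x" x y] by simp
  thus ?thesis by (rule add_eq_0_iff2[THEN iffD1])
qed

lemma ci_ext: "(\<And>z. cinner z u = cinner z (v::'a::chilbert_space)) \<Longrightarrow> u = v"
proof -
  assume h: "\<And>z. cinner z u = cinner z v"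
  have "cinner (u - v) (u - v) = cinner (u - v) (u + - v)" by simp
  also have "\<dots> = cinner (u - v) u + - cinner (u - v) v"
    by (simp only: cinner_add_right ci_minus_right)
  also have "\<dots> = 0" using h[of "u-v"] by simp
  finally have "cinner (u - v) (u - v) = 0" .
  hence "u - v = 0" by (rule cinner_eq_zero_iff[THEN iffD1])
  thus ?thesis by simp
qed

lemma cmod_sq_aux: "(complex_of_real (Re a))^2 + (complex_of_real (Im a))^2 = (complex_of_real (cmod a))^2"
proof -
  have "(cmod a)^2 = (Re a)^2 + (Im a)^2" by (rule cmod_power2)
  hence "complex_of_real ((cmod a)^2) = complex_of_real ((Re a)^2 + (Im a)^2)" by simp
  thus ?thesis by simp
qed

lemma norm_scaleC: "norm (a *\<^sub>C (x::'a::chilbert_space)) = cmod a * norm x"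
proof -
  have "(norm (a *\<^sub>C x))^2 = (cmod a * norm x)^2"
  proof -
    have "complex_of_real ((norm (a *\<^sub>C x))^2) = cinner (a *\<^sub>C x) (a *\<^sub>C x)"
      by (rule ci_self[symmetric])
    also have "\<dots> = cnj a * a * cinner x x"
      by (simp add: ci_scaleC_left cinner_scaleC_right)
    also have "\<dots> = complex_of_real ((cmod a * norm x)^2)"
      by (simp add: ci_self complex_mult_cnj power_mult_distrib mult.commute cmod_sq_aux)
    finally show ?thesis using of_real_eq_iff by blast
  qed
  thus ?thesis by (simp add: power2_eq_iff_nonneg)
qed

lemma cauchy_schwarz: "cmod (cinner x y) \<le> norm x * norm (y::'a::chilbert_space)"
proof (cases "y = 0")
  case True then show ?thesis by simp
next
  case False
  define n where "n = (norm y)^2"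
  have n: "n > 0" using False by (simp add: n_def)
  define c where "c = cinner y x"
  define s where "s = - c / complex_of_real n"
  have cxy: "cinner x y = cnj c" by (simp add: c_def cinner_commute[of x y])
  have "cinner (x + s *\<^sub>C y) (x + s *\<^sub>C y) =
     cinner x x + s * cinner x y + cnj s * cinner y x + cnj s * s * cinner y y"
    by (simp add: ci_add_left cinner_add_right ci_scaleC_left cinner_scaleC_right algebra_simps)
  also have "\<dots> = complex_of_real ((norm x)^2 - (cmod c)^2 / n)"
  proof -
    define N where "N = complex_of_real n"
    have N: "N \<noteq> 0" "cnj N = N" using n by (auto simp: N_def)
    have yy: "cinner y y = N" by (simp add: ci_self N_def n_def)
    have cs: "cnj s = - cnj c / N" using N by (simp add: s_def N_def[symmetric])
    have "cinner x x + s * cinner x y + cnj s * cinner y x + cnj s * s * cinner y y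
       = cinner x x - c * cnj c / N"
      unfolding cxy yy cs c_def[symmetric] using N(1) by (simp add: s_def N_def[symmetric] field_simps)
    also have "\<dots> = complex_of_real ((norm x)^2 - (cmod c)^2 / n)"
      by (simp add: ci_self complex_mult_cnj N_def cmod_sq_aux)
    finally show ?thesis .
  qed
  finally have "0 \<le> (norm x)^2 - (cmod c)^2 / n"
    using cinner_nonneg[of "x + s *\<^sub>C y"] by simp
  hence "(cmod c)^2 \<le> (norm x * norm y)^2" using n by (simp add: n_def field_simps power_mult_distrib)
  hence "cmod c \<le> norm x * norm y" by (simp add: power2_le_iff_abs_le)
  thus ?thesis using cxy by simp
qed


lemma expand_le:
  fixes u v :: "'a::chilbert_space"
  shows "(norm (z *\<^sub>C u + e *\<^sub>C v))^2 \<le>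
     (cmod z)^2 * (norm u)^2 + (cmod e)^2 * (norm v)^2 + 2 * (cmod z * cmod e * cmod (cinner u v))"
proof -
  have "complex_of_real ((norm (z *\<^sub>C u + e *\<^sub>C v))^2) = cinner (z *\<^sub>C u + e *\<^sub>C v) (z *\<^sub>C u + e *\<^sub>C v)"
    by (rule ci_self[symmetric])
  also have "\<dots> = cnj z * z * cinner u u + cnj e * e * cinner v v
      + (cnj z * e * cinner u v + cnj (cnj z * e * cinner u v))"
    by (simp add: ci_add_left cinner_add_right ci_scaleC_left cinner_scaleC_right algebra_simps
       cinner_commute[of v u])
  also have "\<dots> = complex_of_real ((cmod z)^2 * (norm u)^2 + (cmod e)^2 * (norm v)^2
       + 2 * Re (cnj z * e * cinner u v))"
  proof -
    define q where "q = cnj z * e * cinner u v"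
    have q: "q + cnj q = complex_of_real (2 * Re q)" by (simp add: complex_add_cnj)
    have zz: "cnj z * z = complex_of_real ((cmod z)^2)" by (simp add: mult.commute[of "cnj z"] complex_mult_cnj cmod_sq_aux)
    have ee: "cnj e * e = complex_of_real ((cmod e)^2)" by (simp add: mult.commute[of "cnj e"] complex_mult_cnj cmod_sq_aux)
    show ?thesis unfolding q_def[symmetric] q zz ee ci_self by simp
  qed
  finally have eq: "(norm (z *\<^sub>C u + e *\<^sub>C v))^2 = (cmod z)^2 * (norm u)^2 + (cmod e)^2 * (norm v)^2
       + 2 * Re (cnj z * e * cinner u v)" using of_real_eq_iff by blast
  have "Re (cnj z * e * cinner u v) \<le> cmod (cnj z * e * cinner u v)" by (rule complex_Re_le_cmod)
  also have "\<dots> = cmod z * cmod e * cmod (cinner u v)" by (simp add: norm_mult)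
  finally show ?thesis unfolding eq by simp
qed

lemma ci_scaleR_both: "cinner (r *\<^sub>R p) (r *\<^sub>R (q::'a::chilbert_space)) = complex_of_real (r^2) * cinner p q"
  by (simp add: scaleR_scaleC ci_scaleC_left cinner_scaleC_right power2_eq_square)

lemma sq_to_sqrt: "0 \<le> (y::real) \<Longrightarrow> y^2 \<le> M * (norm (x::'b::real_normed_vector))^2 \<Longrightarrow> y \<le> sqrt M * norm x"
proof -
  assume "0 \<le> y" "y^2 \<le> M * (norm x)^2"
  hence "y \<le> sqrt (M * (norm x)^2)" by (simp add: real_le_rsqrt)
  also have "\<dots> = sqrt M * norm x" by (simp add: real_sqrt_mult)
  finally show ?thesis .
qed

lemma dragomir_ne: "{(z, e). (cmod z)\<^sup>2 + (cmod e)\<^sup>2 \<le> (1::real)} \<noteq> {}"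
proof -
  have "(0::complex, 0::complex) \<in> {(z, e). (cmod z)\<^sup>2 + (cmod e)\<^sup>2 \<le> (1::real)}" by simp
  thus ?thesis by blast
qed

theorem theorem3p3:
  fixes T Ts :: "'a::chilbert_space \<Rightarrow> 'a"
  assumes "bounded_clinear_op T"
    and "is_adjoint T Ts"
  shows "dragomir T Ts \<le> min (sqrt (onorm (\<lambda>x. T (Ts x) + Ts (T x))))
                             (sqrt ((onorm T)\<^sup>2 + numrad (\<lambda>x. T (T x))))"
proof -
  have Tadd: "\<And>x y. T (x + y) = T x + T y" and TC: "\<And>a x. T (a *\<^sub>C x) = a *\<^sub>C T x"
    and "\<exists>K. \<forall>x. norm (T x) \<le> norm x * K" using assms(1) unfolding bounded_clinear_op_def by auto
  then obtain K where K: "\<And>x. norm (T x) \<le> norm x * K" by blast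
  have adj: "\<And>x y. cinner (T x) y = cinner x (Ts y)" using assms(2) unfolding is_adjoint_def by auto
  have blT: "bounded_linear T"
  proof (rule bounded_linear_intro[where f=T and K=K])
    show "T (x + y) = T x + T y" for x y by (rule Tadd)
    show "T (r *\<^sub>R x) = r *\<^sub>R T x" for r x by (simp only: scaleR_scaleC TC)
    show "norm (T x) \<le> norm x * K" for x by (rule K)
  qed
  define nT where "nT = onorm T"
  have nT0: "0 \<le> nT" unfolding nT_def by (rule onorm_pos_le[OF blT])
  have Tb: "\<And>x. norm (T x) \<le> nT * norm x" unfolding nT_def by (rule onorm[OF blT])
  have Tsadd: "\<And>x y. Ts (x + y) = Ts x + Ts y"
    by (rule ci_ext) (simp add: adj[symmetric] cinner_add_right)
  have TsC: "\<And>a x. Ts (a *\<^sub>C x) = a *\<^sub>C Ts x"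
    by (rule ci_ext) (simp add: adj[symmetric] cinner_scaleC_right)
  have Tsb: "norm (Ts y) \<le> nT * norm y" for y
  proof (cases "Ts y = 0")
    case True then show ?thesis using nT0 by simp
  next
    case False
    have "(norm (Ts y))^2 = Re (cinner (Ts y) (Ts y))" by (simp add: ci_self)
    also have "\<dots> = Re (cinner (T (Ts y)) y)" by (simp add: adj)
    also have "\<dots> \<le> cmod (cinner (T (Ts y)) y)" by (rule complex_Re_le_cmod)
    also have "\<dots> \<le> norm (T (Ts y)) * norm y" by (rule cauchy_schwarz)
    also have "\<dots> \<le> nT * norm (Ts y) * norm y" by (simp add: Tb mult_right_mono)
    finally have "norm (Ts y) * norm (Ts y) \<le> (nT * norm y) * norm (Ts y)"
      by (simp add: power2_eq_square algebra_simps)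
    thus ?thesis using False by simp
  qed
  have blTs: "bounded_linear Ts"
  proof (rule bounded_linear_intro[where f=Ts and K=nT])
    show "Ts (x + y) = Ts x + Ts y" for x y by (rule Tsadd)
    show "Ts (r *\<^sub>R x) = r *\<^sub>R Ts x" for r x by (simp only: scaleR_scaleC TsC)
    show "norm (Ts x) \<le> norm x * nT" for x using Tsb[of x] by (simp add: mult.commute)
  qed
  define S where "S = (\<lambda>x. T (Ts x) + Ts (T x))"
  have blS: "bounded_linear S" unfolding S_def
    by (intro bounded_linear_add bounded_linear_compose[OF blT blTs] bounded_linear_compose[OF blTs blT])
  define nS where "nS = onorm S"
  have nS0: "0 \<le> nS" unfolding nS_def by (rule onorm_pos_le[OF blS])
  have Sb: "\<And>x. norm (S x) \<le> nS * norm x" unfolding nS_def by (rule onorm[OF blS])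
  define w where "w = numrad (\<lambda>x. T (T x))"
  define W where "W = insert 0 ((\<lambda>x. cmod (cinner (T (T x)) x)) ` {x. norm x = 1})"
  have bddW: "bdd_above W" unfolding W_def bdd_above_def
  proof (intro exI[of _ "nT * nT"] ballI)
    fix r assume "r \<in> insert 0 ((\<lambda>x. cmod (cinner (T (T x)) x)) ` {x. norm x = 1})"
    then consider "r = 0" | x where "norm x = 1" "r = cmod (cinner (T (T x)) x)" by blast
    then show "r \<le> nT * nT"
    proof cases
      case 1 then show ?thesis using nT0 by simp
    next
      case 2
      have "r \<le> norm (T (T x)) * norm x" using 2 cauchy_schwarz[of "T (T x)" x] by simp
      also have "\<dots> = norm (T (T x))" using 2(1) by simp
      also have "\<dots> \<le> nT * norm (T x)" by (rule Tb)
      also have "\<dots> \<le> nT * (nT * norm x)" by (rule mult_left_mono[OF Tb nT0])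
      also have "\<dots> = nT * nT" using 2(1) by simp
      finally show ?thesis .
    qed
  qed
  have w_eq: "w = Sup W" unfolding w_def W_def numrad_def by simp
  have w0: "0 \<le> w" unfolding w_eq by (rule cSup_upper[OF _ bddW]) (simp add: W_def)
  have wb: "cmod (cinner (T (T x)) x) \<le> w * (norm x)^2" for x
  proof (cases "x = 0")
    case True then show ?thesis by simp
  next
    case False
    define r where "r = 1 / norm x"
    have r: "r > 0" using False by (simp add: r_def)
    define u where "u = r *\<^sub>R x"
    have nu: "norm u = 1" using False by (simp add: u_def r_def)
    have "T (T u) = r *\<^sub>R T (T x)" unfolding u_def
      by (simp add: linear_simps(5)[OF blT])
    hence "cinner (T (T u)) u = complex_of_real (r^2) * cinner (T (T x)) x"
      by (simp add: u_def ci_scaleR_both)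
    hence "cmod (cinner (T (T u)) u) = r^2 * cmod (cinner (T (T x)) x)"
      by (simp only: norm_mult norm_of_real) simp
    moreover have "cmod (cinner (T (T u)) u) \<le> w"
      unfolding w_eq by (rule cSup_upper[OF _ bddW]) (use nu in \<open>auto simp: W_def\<close>)
    ultimately have "r^2 * cmod (cinner (T (T x)) x) \<le> w" by simp
    thus ?thesis using False by (simp add: r_def field_simps)
  qed
  have main: "onorm (\<lambda>x. fst p *\<^sub>C T x + snd p *\<^sub>C Ts x) \<le> sqrt nS"
     "onorm (\<lambda>x. fst p *\<^sub>C T x + snd p *\<^sub>C Ts x) \<le> sqrt (nT^2 + w)"
    if p: "p \<in> {(z, e). (cmod z)\<^sup>2 + (cmod e)\<^sup>2 \<le> 1}" for p
  proof -
    obtain z e where pe: "p = (z, e)" and ze: "(cmod z)^2 + (cmod e)^2 \<le> 1" using p by auto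
    define Z where "Z = cmod z"
    define E where "E = cmod e"
    have ZE: "Z \<ge> 0" "E \<ge> 0" "Z^2 + E^2 \<le> 1" using ze by (auto simp: Z_def E_def)
    have ex: "(norm (z *\<^sub>C T x + e *\<^sub>C Ts x))^2 \<le>
       Z^2 * (norm (T x))^2 + E^2 * (norm (Ts x))^2 + 2 * (Z * E * cmod (cinner (T (T x)) x))" for x
      using expand_le[of z "T x" e "Ts x"] by (simp add: Z_def E_def adj)
    have b1: "(norm (z *\<^sub>C T x + e *\<^sub>C Ts x))^2 \<le> nS * (norm x)^2" for x
    proof -
      define a where "a = norm (T x)"
      define b where "b = norm (Ts x)"
      have ab: "a \<ge> 0" "b \<ge> 0" by (auto simp: a_def b_def)
      have c: "cmod (cinner (T (T x)) x) \<le> a * b"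
        using cauchy_schwarz[of "T x" "Ts x"] by (simp add: adj a_def b_def)
      have "Z * E * cmod (cinner (T (T x)) x) \<le> Z * E * (a * b)"
        using c ZE by (simp add: mult_left_mono)
      moreover have "Z^2 * a^2 + E^2 * b^2 + 2 * (Z * E * (a * b)) \<le> a^2 + b^2"
      proof -
        have "0 \<le> (Z * b - E * a)^2" by simp
        moreover have "(Z^2 + E^2) * (a^2 + b^2) \<le> a^2 + b^2"
          using ZE by (simp add: mult_left_le_one_le)
        ultimately show ?thesis by (simp add: power2_eq_square algebra_simps)
      qed
      moreover have "a^2 + b^2 = Re (cinner x (S x))"
      proof -
        have "a^2 = Re (cinner (T x) (T x))" by (simp add: ci_self a_def)
        also have "\<dots> = Re (cinner x (Ts (T x)))" by (simp add: adj)
        finally have 1: "a^2 = Re (cinner x (Ts (T x)))" .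
        have "b^2 = Re (cinner (Ts x) (Ts x))" by (simp add: ci_self b_def)
        also have "\<dots> = Re (cinner (T (Ts x)) x)" by (simp add: adj)
        also have "\<dots> = Re (cinner x (T (Ts x)))" by (subst cinner_commute) simp
        finally show ?thesis using 1 by (simp add: S_def cinner_add_right)
      qed
      moreover have "Re (cinner x (S x)) \<le> nS * (norm x)^2"
      proof -
        have "Re (cinner x (S x)) \<le> cmod (cinner x (S x))" by (rule complex_Re_le_cmod)
        also have "\<dots> \<le> norm x * norm (S x)" by (rule cauchy_schwarz)
        also have "\<dots> \<le> norm x * (nS * norm x)" by (simp add: Sb mult_left_mono)
        finally show ?thesis by (simp add: power2_eq_square algebra_simps)
      qed
      ultimately show ?thesis using ex[of x] unfolding a_def b_def by linarith
    qed
    have b2: "(norm (z *\<^sub>C T x + e *\<^sub>C Ts x))^2 \<le> (nT^2 + w) * (norm x)^2" for x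
    proof -
      have a: "(norm (T x))^2 \<le> nT^2 * (norm x)^2"
        using Tb[of x] by (metis norm_ge_zero power_mono power_mult_distrib)
      have b: "(norm (Ts x))^2 \<le> nT^2 * (norm x)^2"
        using Tsb[of x] by (metis norm_ge_zero power_mono power_mult_distrib)
      have i1: "Z^2 * (norm (T x))^2 \<le> Z^2 * (nT^2 * (norm x)^2)" using a by (simp add: mult_left_mono)
      have i2: "E^2 * (norm (Ts x))^2 \<le> E^2 * (nT^2 * (norm x)^2)" using b by (simp add: mult_left_mono)
      have i3: "Z * E * cmod (cinner (T (T x)) x) \<le> Z * E * (w * (norm x)^2)"
        using wb[of x] ZE by (simp add: mult_left_mono)
      have i4: "2 * (Z * E) \<le> 1"
      proof -
        have "0 \<le> (Z - E)^2" by simp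
        thus ?thesis using ZE by (simp add: power2_eq_square algebra_simps)
      qed
      have "0 \<le> w * (norm x)^2" using w0 by simp
      hence i5: "2 * (Z * E) * (w * (norm x)^2) \<le> 1 * (w * (norm x)^2)"
        using i4 by (intro mult_right_mono) auto
      have "Z^2 * (norm (T x))^2 + E^2 * (norm (Ts x))^2 + 2 * (Z * E * cmod (cinner (T (T x)) x))
          \<le> (Z^2 + E^2) * (nT^2 * (norm x)^2) + 1 * (w * (norm x)^2)"
        using i1 i2 i3 i5 unfolding distrib_right mult.assoc by linarith
      also have "\<dots> \<le> 1 * (nT^2 * (norm x)^2) + 1 * (w * (norm x)^2)"
        using ZE by (intro add_right_mono mult_right_mono) auto
      finally show ?thesis using ex[of x] by (simp add: algebra_simps)
    qed
    show "onorm (\<lambda>x. fst p *\<^sub>C T x + snd p *\<^sub>C Ts x) \<le> sqrt nS"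
      unfolding pe fst_conv snd_conv
    proof (rule onorm_bound)
      show "0 \<le> sqrt nS" using nS0 by simp
      fix x
      show "norm (z *\<^sub>C T x + e *\<^sub>C Ts x) \<le> sqrt nS * norm x"
        using sq_to_sqrt[OF norm_ge_zero b1[of x]] by simp
    qed
    show "onorm (\<lambda>x. fst p *\<^sub>C T x + snd p *\<^sub>C Ts x) \<le> sqrt (nT^2 + w)"
      unfolding pe fst_conv snd_conv
    proof (rule onorm_bound)
      show "0 \<le> sqrt (nT^2 + w)" using w0 by simp
      fix x
      show "norm (z *\<^sub>C T x + e *\<^sub>C Ts x) \<le> sqrt (nT^2 + w) * norm x"
        using sq_to_sqrt[OF norm_ge_zero b2[of x]] by simp
    qed
  qed
  have d1: "dragomir T Ts \<le> sqrt nS"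
    unfolding dragomir_def by (rule cSUP_least[OF dragomir_ne]) (rule main(1))
  have d2: "dragomir T Ts \<le> sqrt (nT^2 + w)"
    unfolding dragomir_def by (rule cSUP_least[OF dragomir_ne]) (rule main(2))
  have e1: "nS = onorm (\<lambda>x. T (Ts x) + Ts (T x))" by (simp only: nS_def S_def)
  have e2: "nT^2 + w = (onorm T)\<^sup>2 + numrad (\<lambda>x. T (T x))" by (simp only: nT_def w_def)
  note d1' = d1[unfolded e1]
  note d2' = d2[unfolded e2]
  show ?thesis by (rule min.boundedI[OF d1' d2'])
qed

end
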